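(* Let $N=6$, $k=3$, $T=2$, $p_{11}=0.3$, $p_{01}=0.5$ (so $p_{11}<p_{01}$), and initial beliefs $(\omega_1,\dots,\omega_6)=(0.99,0.5,0.4,0.39,0.25,0.25)$. Consider the policy that senses channels $\{1,2,4\}$ in slot $1$ and, in slot $2$, senses three channels with the largest updated beliefs. Its expected total reward over the two slots is strictly larger than that of the myopic sensing policy, which senses $\{1,2,3\}$ in slot $1$ and three channels with the largest updated beliefs in slot $2$. In particular, the myopic sensing policy is not optimal in this instance.
   Context: Opportunistic spectrum access model. There are $N$ channels. The state $S_i(t)\in\{0,1\}$ of channel $i$ in slot $t$ (0 = busy, 1 = idle) evolves as a two-state discrete-time Markov chain with transition probabilities $p_{ij}=\Pr(S_i(t+1)=j\mid S_i(t)=i)$. The chains are independent across channels and all have the same transition probabilities $p_{01},p_{11}$. The initial states are independent with $\Pr(S_i(1)=1)=\omega_i$. In each slot, a user senses a set of exactly $k$ channels, chosen based on past actions and observations. It observes their states and obtains reward $1$ if at least one sensed channel is idle, and reward $0$ otherwise. The objective is the expected total reward over $T$ slots. Beliefs $\omega_i(t)$ (conditional probability that channel $i$ is idle in slot $t$) update as follows: $\omega_i(t+1)=p_{11}$ if $i$ was sensed and found idle; $\omega_i(t+1)=p_{01}$ if $i$ was sensed and found busy; and $\omega_i(t+1)=\tau(\omega_i(t))$ if $i$ was not sensed, where $\tau(\omega)=\omega p_{11}+(1-\omega)p_{01}$. The myopic sensing policy senses, in each slot, $k$ channels with the largest current beliefs. A policy is optimal if it maximizes the expected total reward. *)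

theory Defs
  imports Complex_Main
begin

text \<open>Channels are 1..N; beliefs are functions
  nat => real (probability that channel i is idle). An action is the set A of sensed
  channels; an observation is the set I (subset of A) of sensed channels found idle. A (general, history-dependent)
  policy maps the slot number t (starting at 1) and the history to the set to sense.\<close>

type_synonym belief = "nat \<Rightarrow> real"
type_synonym hist = "(nat set \<times> nat set) list"
type_synonym policy = "nat \<Rightarrow> hist \<Rightarrow> nat set"

definition tau :: "real \<Rightarrow> real \<Rightarrow> real \<Rightarrow> real" where
  "tau p01 p11 w = w * p11 + (1 - w) * p01"

definition upd :: "real \<Rightarrow> real \<Rightarrow> belief \<Rightarrow> nat set \<Rightarrow> nat set \<Rightarrow> belief" where
  "upd p01 p11 w A I = (\<lambda>i. if i \<in> I then p11 else if i \<in> A then p01 else tau p01 p11 (w i))"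

definition belief_after :: "real \<Rightarrow> real \<Rightarrow> belief \<Rightarrow> hist \<Rightarrow> belief" where
  "belief_after p01 p11 w0 h = foldl (\<lambda>w (A, I). upd p01 p11 w A I) w0 h"

definition obs_prob :: "belief \<Rightarrow> nat set \<Rightarrow> nat set \<Rightarrow> real" where
  "obs_prob w A I = (\<Prod>i\<in>I. w i) * (\<Prod>i\<in>A - I. 1 - w i)"

fun val :: "real \<Rightarrow> real \<Rightarrow> policy \<Rightarrow> nat \<Rightarrow> nat \<Rightarrow> hist \<Rightarrow> belief \<Rightarrow> real" where
  "val p01 p11 pol 0 t h w = 0"
| "val p01 p11 pol (Suc n) t h w =
     (let A = pol t h in
      \<Sum>I\<in>Pow A. obs_prob w A I *
         ((if I \<noteq> {} then 1 else 0) + val p01 p11 pol n (Suc t) (h @ [(A, I)]) (upd p01 p11 w A I)))"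

definition total_reward :: "real \<Rightarrow> real \<Rightarrow> nat \<Rightarrow> belief \<Rightarrow> policy \<Rightarrow> real" where
  "total_reward p01 p11 T w0 pol = val p01 p11 pol T 1 [] w0"

definition valid_policy :: "nat \<Rightarrow> nat \<Rightarrow> policy \<Rightarrow> bool" where
  "valid_policy N k pol = (\<forall>t h. pol t h \<subseteq> {1..N} \<and> card (pol t h) = k)"

definition is_topk :: "nat \<Rightarrow> nat \<Rightarrow> belief \<Rightarrow> nat set \<Rightarrow> bool" where
  "is_topk N k w S = (S \<subseteq> {1..N} \<and> card S = k \<and> (\<forall>i\<in>S. \<forall>j\<in>{1..N} - S. w j \<le> w i))"

definition myopic :: "nat \<Rightarrow> nat \<Rightarrow> real \<Rightarrow> real \<Rightarrow> belief \<Rightarrow> policy \<Rightarrow> bool" where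
  "myopic N k p01 p11 w0 pol =
     (\<forall>h. is_topk N k (belief_after p01 p11 w0 h) (pol (Suc (length h)) h))"

definition optimal :: "nat \<Rightarrow> nat \<Rightarrow> real \<Rightarrow> real \<Rightarrow> nat \<Rightarrow> belief \<Rightarrow> policy \<Rightarrow> bool" where
  "optimal N k p01 p11 T w0 pol =
     (valid_policy N k pol \<and>
      (\<forall>pol'. valid_policy N k pol' \<longrightarrow> total_reward p01 p11 T w0 pol' \<le> total_reward p01 p11 T w0 pol))"

end

theory Submission
  imports Defs
begin

lemma sum_obs: "finite A \<Longrightarrow> (\<Sum>I\<in>Pow A. obs_prob w A I) = 1"
  using prod_add[of A w "\<lambda>i. 1 - w i"] by (simp add: obs_prob_def)

lemma val1:
  assumes "finite (pol t h)"
  shows "val p01 p11 pol (Suc 0) t h w = 1 - (\<Prod>i\<in>pol t h. 1 - w i)"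
proof -
  let ?A = "pol t h"
  have e: "{} \<in> Pow ?A" by simp
  have "val p01 p11 pol (Suc 0) t h w = (\<Sum>I\<in>Pow ?A. obs_prob w ?A I * (if I \<noteq> {} then 1 else 0))"
    by (simp add: Let_def)
  also have "\<dots> = (\<Sum>I\<in>Pow ?A - {{}}. obs_prob w ?A I)"
    using assms by (subst sum.remove[OF _ e]) (auto intro!: sum.cong)
  also have "\<dots> = (\<Sum>I\<in>Pow ?A. obs_prob w ?A I) - obs_prob w ?A {}"
    using assms by (subst sum_diff1) auto
  also have "\<dots> = 1 - (\<Prod>i\<in>pol t h. 1 - w i)"
    using sum_obs[OF assms] by (simp add: obs_prob_def)
  finally show ?thesis .
qed

lemma val2:
  assumes "finite (pol 1 [])" "\<And>I. finite (pol 2 [(pol 1 [], I)])"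
  shows "val p01 p11 pol 2 1 [] w = (\<Sum>I\<in>Pow (pol 1 []). obs_prob w (pol 1 []) I *
     ((if I \<noteq> {} then 1 else 0) + (1 - (\<Prod>i\<in>pol 2 [(pol 1 [], I)]. 1 - upd p01 p11 w (pol 1 []) I i))))"
proof -
  have "val p01 p11 pol 2 1 [] w = val p01 p11 pol (Suc (Suc 0)) 1 [] w"
    by (simp add: numeral_2_eq_2)
  also have "\<dots> = (\<Sum>I\<in>Pow (pol 1 []). obs_prob w (pol 1 []) I *
     ((if I \<noteq> {} then 1 else 0) + val p01 p11 pol (Suc 0) 2 [(pol 1 [], I)] (upd p01 p11 w (pol 1 []) I)))"
    by (simp only: val.simps Let_def Suc_1 append_Nil)
  also have "\<dots> = (\<Sum>I\<in>Pow (pol 1 []). obs_prob w (pol 1 []) I *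
     ((if I \<noteq> {} then 1 else 0) + (1 - (\<Prod>i\<in>pol 2 [(pol 1 [], I)]. 1 - upd p01 p11 w (pol 1 []) I i))))"
    using assms(2) by (intro sum.cong refl) (simp only: val1)
  finally show ?thesis .
qed

lemma topk_le:
  assumes "is_topk N k w S" "S' \<subseteq> {1..N}" "card S' = k" "\<forall>i\<in>{1..N}. 0 \<le> w i \<and> w i \<le> 1"
  shows "(\<Prod>i\<in>S. 1 - w i) \<le> (\<Prod>i\<in>S'. 1 - w i)"
  using assms(2,3)
proof (induction "card (S' - S)" arbitrary: S' rule: less_induct)
  case less
  have fS: "finite S" and SN: "S \<subseteq> {1..N}" and cS: "card S = k"
    and top: "\<forall>i\<in>S. \<forall>j\<in>{1..N} - S. w j \<le> w i"
    using assms(1) finite_subset[of S "{1..N}"] by (auto simp: is_topk_def)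
  have fS': "finite S'" using less.prems finite_subset by blast
  show ?case
  proof (cases "S' - S = {}")
    case True
    then have "S' \<subseteq> S" by blast
    with fS cS less.prems have "S' = S" by (metis card_subset_eq)
    then show ?thesis by simp
  next
    case False
    then obtain j where j: "j \<in> S'" "j \<notin> S" by blast
    have "card (S - S') = card (S' - S)"
      using fS fS' cS less.prems(2) by (metis card_Diff_subset_Int Int_commute finite_Int)
    then have "S - S' \<noteq> {}" using False fS' by (metis card_0_eq card.empty finite_Diff)
    then obtain i where i: "i \<in> S" "i \<notin> S'" by blast
    define S'' where "S'' = insert i (S' - {j})"
    have jN: "j \<in> {1..N}" using j less.prems by auto
    have wji: "w j \<le> w i" using top i j jN by auto
    have S''N: "S'' \<subseteq> {1..N}" using SN i less.prems by (auto simp: S''_def)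
    have "k > 0" using fS' j less.prems(2) card_gt_0_iff by blast
    then have cS'': "card S'' = k" using fS' i j less.prems by (simp add: S''_def)
    have "S'' - S = (S' - S) - {j}" using i j by (auto simp: S''_def)
    then have lt: "card (S'' - S) < card (S' - S)"
      using j fS' by (metis DiffI card_Diff1_less finite_Diff)
    have IH: "(\<Prod>i\<in>S. 1 - w i) \<le> (\<Prod>i\<in>S''. 1 - w i)"
      using less.hyps[OF lt S''N cS''] .
    have nn: "0 \<le> (\<Prod>x\<in>S' - {j}. 1 - w x)"
      using less.prems assms(4) by (intro prod_nonneg) auto
    have "(\<Prod>x\<in>S''. 1 - w x) = (1 - w i) * (\<Prod>x\<in>S' - {j}. 1 - w x)"
      using fS' i by (simp add: S''_def)
    also have "\<dots> \<le> (1 - w j) * (\<Prod>x\<in>S' - {j}. 1 - w x)"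
      using wji nn by (intro mult_right_mono) auto
    also have "\<dots> = (\<Prod>x\<in>S'. 1 - w x)"
      using fS' j by (simp add: prod.remove)
    finally show ?thesis using IH by linarith
  qed
qed

lemma topk_eq:
  assumes "is_topk N k w S" "is_topk N k w S0" "\<forall>i\<in>{1..N}. 0 \<le> w i \<and> w i \<le> 1"
  shows "(\<Prod>i\<in>S. 1 - w i) = (\<Prod>i\<in>S0. 1 - w i)"
  using topk_le[OF assms(1) _ _ assms(3), of S0] topk_le[OF assms(2) _ _ assms(3), of S] assms
  by (auto simp: is_topk_def)


lemma upd_bnd:
  assumes "0 \<le> p01" "p01 \<le> 1" "0 \<le> p11" "p11 \<le> 1" "\<forall>i\<in>{1..N}. 0 \<le> w i \<and> w i \<le> 1"
  shows "\<forall>i\<in>{1..N}. 0 \<le> upd p01 p11 w A I i \<and> upd p01 p11 w A I i \<le> 1"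
proof
  fix i assume i: "i \<in> {1..N}"
  have "0 \<le> tau p01 p11 (w i) \<and> tau p01 p11 (w i) \<le> 1"
  proof -
    have a: "0 \<le> w i" "w i \<le> 1" using assms(5) i by auto
    have "w i * p11 \<le> w i" using a assms by (simp add: mult_left_le)
    moreover have "(1 - w i) * p01 \<le> 1 - w i" using a assms by (simp add: mult_left_le)
    ultimately show ?thesis using a assms unfolding tau_def by (simp add: add_nonneg_nonneg)
  qed
  then show "0 \<le> upd p01 p11 w A I i \<and> upd p01 p11 w A I i \<le> 1"
    using assms by (simp add: upd_def)
qed

lemma six: "{1..6::nat} = {1,2,3,4,5,6}" by auto

lemma sum_pow_insert:
  assumes "finite A" "a \<notin> A"
  shows "(\<Sum>I\<in>Pow (insert a A). f I) = (\<Sum>I\<in>Pow A. f I) + (\<Sum>I\<in>Pow A. f (insert a I))"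
proof -
  have inj: "inj_on (insert a) (Pow A)" using assms(2) unfolding inj_on_def by (metis PowD insert_ident subsetD)
  have d: "Pow A \<inter> insert a ` Pow A = {}" using assms(2) by blast
  have "(\<Sum>I\<in>Pow (insert a A). f I) = (\<Sum>I\<in>Pow A. f I) + (\<Sum>I\<in>insert a ` Pow A. f I)"
    unfolding Pow_insert using assms(1) d by (simp add: sum.union_disjoint)
  also have "(\<Sum>I\<in>insert a ` Pow A. f I) = (\<Sum>I\<in>Pow A. f (insert a I))"
    using sum.reindex[OF inj] by simp
  finally show ?thesis .
qed

lemma sum_pow3:
  assumes "a \<noteq> b" "a \<noteq> c" "b \<noteq> c"
  shows "(\<Sum>I\<in>Pow {a,b,c}. f I) = f {} + f {a} + f {b} + f {c} + f {a,b} + f {a,c} + f {b,c} + f {a,b,c}"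
  using assms by (simp add: sum_pow_insert add_ac)

theorem mainTheorem5:
  fixes N k T :: nat and p11 p01 :: real and w0 :: belief and pol1 pol2 :: policy
  assumes "N = 6" and "k = 3" and "T = 2" and "p11 = 0.3" and "p01 = 0.5"
    and "w0 = (\<lambda>i. if i = 1 then 0.99 else if i = 2 then 0.5 else if i = 3 then 0.4
                 else if i = 4 then 0.39 else if i = 5 then 0.25 else if i = 6 then 0.25 else 0)"
    and "valid_policy N k pol1"
    and "pol1 1 [] = {1, 2, 4}"
    and "\<forall>h. length h = 1 \<longrightarrow> is_topk N k (belief_after p01 p11 w0 h) (pol1 2 h)"
    and "valid_policy N k pol2"
    and "myopic N k p01 p11 w0 pol2"
  shows "pol2 1 [] = {1, 2, 3}
     \<and> total_reward p01 p11 T w0 pol1 > total_reward p01 p11 T w0 pol2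
     \<and> \<not> optimal N k p01 p11 T w0 pol2"
proof -
  define w where "w = (\<lambda>i::nat. if i = 1 then 0.99 else if i = 2 then 0.5 else if i = 3 then 0.4
                 else if i = 4 then 0.39 else if i = 5 then 0.25 else if i = 6 then 0.25 else (0::real))"
  have w0: "w0 = w" using assms(6) w_def by simp
  have P: "p11 = 3/10" "p01 = 1/2" using assms(4,5) by simp_all
  have wb: "\<forall>i\<in>{1..6}. 0 \<le> w i \<and> w i \<le> 1" unfolding six w_def by simp
  have ub: "\<And>A I. \<forall>i\<in>{1..6}. 0 \<le> upd (1/2) (3/10) w A I i \<and> upd (1/2) (3/10) w A I i \<le> 1"
    by (rule upd_bnd[OF _ _ _ _ wb]) auto
  have v1: "valid_policy 6 3 pol1" and v2: "valid_policy 6 3 pol2"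
    using assms by auto
  have f1: "\<And>t h. finite (pol1 t h)" using v1 unfolding valid_policy_def by (meson finite_atLeastAtMost finite_subset)
  have f2: "\<And>t h. finite (pol2 t h)" using v2 unfolding valid_policy_def by (meson finite_atLeastAtMost finite_subset)
  have t1: "\<And>A I. is_topk 6 3 (upd (1/2) (3/10) w A I) (pol1 2 [(A, I)])"
  proof -
    fix A I
    show "is_topk 6 3 (upd (1/2) (3/10) w A I) (pol1 2 [(A, I)])"
      using assms(9)[rule_format, of "[(A, I)]"] assms(1,2,4,5) w0 by (simp add: belief_after_def)
  qed
  have m: "\<And>h. is_topk 6 3 (belief_after (1/2) (3/10) w h) (pol2 (Suc (length h)) h)"
    using assms(11) assms(1,2,4,5) w0 unfolding myopic_def by simp
  have t2: "\<And>A I. is_topk 6 3 (upd (1/2) (3/10) w A I) (pol2 2 [(A, I)])"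
  proof -
    fix A I
    show "is_topk 6 3 (upd (1/2) (3/10) w A I) (pol2 2 [(A, I)])"
      using m[of "[(A, I)]"] by (simp add: belief_after_def numeral_2_eq_2)
  qed
  have p2: "pol2 1 [] = {1, 2, 3}"
  proof -
    have tk: "is_topk 6 3 w (pol2 1 [])" using m[of "[]"] by (simp add: belief_after_def)
    let ?S = "pol2 1 []"
    have SN: "?S \<subseteq> {1,2,3,4,5,6}" and cS: "card ?S = 3" and
      top: "\<forall>i\<in>?S. \<forall>j\<in>{1,2,3,4,5,6} - ?S. w j \<le> w i"
      using tk unfolding is_topk_def six by auto
    have in1: "1 \<in> ?S"
    proof (rule ccontr)
      assume nx: "1 \<notin> ?S"
      have a: "\<And>i. i \<in> ?S \<Longrightarrow> w 1 \<le> w i \<and> i \<in> {1,2,3,4,5,6}" using SN top nx by auto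
      have b: "\<And>i::nat. w 1 \<le> w i \<and> i \<in> {1,2,3,4,5,6} \<Longrightarrow> i \<noteq> 1 \<Longrightarrow> i \<in> {1}" by (auto simp: w_def)
      have "?S \<subseteq> {1}" using a b nx by blast
      then have "card ?S \<le> 1" using card_mono[of "{1::nat}" ?S] by simp
      then show False using cS by simp
    qed
    have in2: "2 \<in> ?S"
    proof (rule ccontr)
      assume nx: "2 \<notin> ?S"
      have a: "\<And>i. i \<in> ?S \<Longrightarrow> w 2 \<le> w i \<and> i \<in> {1,2,3,4,5,6}" using SN top nx by auto
      have b: "\<And>i::nat. w 2 \<le> w i \<and> i \<in> {1,2,3,4,5,6} \<Longrightarrow> i \<noteq> 2 \<Longrightarrow> i \<in> {1}" by (auto simp: w_def)
      have "?S \<subseteq> {1}" using a b nx by blast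
      then have "card ?S \<le> 1" using card_mono[of "{1::nat}" ?S] by simp
      then show False using cS by simp
    qed
    have in3: "3 \<in> ?S"
    proof (rule ccontr)
      assume nx: "3 \<notin> ?S"
      have a: "\<And>i. i \<in> ?S \<Longrightarrow> w 3 \<le> w i \<and> i \<in> {1,2,3,4,5,6}" using SN top nx by auto
      have b: "\<And>i::nat. w 3 \<le> w i \<and> i \<in> {1,2,3,4,5,6} \<Longrightarrow> i \<noteq> 3 \<Longrightarrow> i \<in> {1,2}" by (auto simp: w_def)
      have "?S \<subseteq> {1,2}" using a b nx by blast
      then have "card ?S \<le> 2" using card_mono[of "{1,2::nat}" ?S] by simp
      then show False using cS by simp
    qed
    have "{1,2,3} \<subseteq> ?S" using in1 in2 in3 by simp
    moreover have "card {1,2,3::nat} = card ?S" using cS by simp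
    ultimately show ?thesis using card_subset_eq[OF f2] by metis
  qed
  have r1_e: "(\<Prod>i\<in>pol1 2 [({1,2,4}, {})]. 1 - upd (1/2) (3/10) w {1,2,4} {} i) = (\<Prod>i\<in>{1,2,4}. 1 - upd (1/2) (3/10) w {1,2,4} {} i)"
  proof (rule topk_eq[OF t1 _ ub])
    show "is_topk 6 3 (upd (1/2) (3/10) w {1,2,4} {}) {1,2,4}"
      unfolding is_topk_def six upd_def tau_def w_def by (simp add: insert_Diff_if)
  qed
  have r1_1: "(\<Prod>i\<in>pol1 2 [({1,2,4}, {1})]. 1 - upd (1/2) (3/10) w {1,2,4} {1} i) = (\<Prod>i\<in>{2,4,5}. 1 - upd (1/2) (3/10) w {1,2,4} {1} i)"
  proof (rule topk_eq[OF t1 _ ub])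
    show "is_topk 6 3 (upd (1/2) (3/10) w {1,2,4} {1}) {2,4,5}"
      unfolding is_topk_def six upd_def tau_def w_def by (simp add: insert_Diff_if)
  qed
  have r1_2: "(\<Prod>i\<in>pol1 2 [({1,2,4}, {2})]. 1 - upd (1/2) (3/10) w {1,2,4} {2} i) = (\<Prod>i\<in>{1,4,5}. 1 - upd (1/2) (3/10) w {1,2,4} {2} i)"
  proof (rule topk_eq[OF t1 _ ub])
    show "is_topk 6 3 (upd (1/2) (3/10) w {1,2,4} {2}) {1,4,5}"
      unfolding is_topk_def six upd_def tau_def w_def by (simp add: insert_Diff_if)
  qed
  have r1_4: "(\<Prod>i\<in>pol1 2 [({1,2,4}, {4})]. 1 - upd (1/2) (3/10) w {1,2,4} {4} i) = (\<Prod>i\<in>{1,2,5}. 1 - upd (1/2) (3/10) w {1,2,4} {4} i)"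
  proof (rule topk_eq[OF t1 _ ub])
    show "is_topk 6 3 (upd (1/2) (3/10) w {1,2,4} {4}) {1,2,5}"
      unfolding is_topk_def six upd_def tau_def w_def by (simp add: insert_Diff_if)
  qed
  have r1_12: "(\<Prod>i\<in>pol1 2 [({1,2,4}, {1,2})]. 1 - upd (1/2) (3/10) w {1,2,4} {1,2} i) = (\<Prod>i\<in>{4,5,6}. 1 - upd (1/2) (3/10) w {1,2,4} {1,2} i)"
  proof (rule topk_eq[OF t1 _ ub])
    show "is_topk 6 3 (upd (1/2) (3/10) w {1,2,4} {1,2}) {4,5,6}"
      unfolding is_topk_def six upd_def tau_def w_def by (simp add: insert_Diff_if)
  qed
  have r1_14: "(\<Prod>i\<in>pol1 2 [({1,2,4}, {1,4})]. 1 - upd (1/2) (3/10) w {1,2,4} {1,4} i) = (\<Prod>i\<in>{2,5,6}. 1 - upd (1/2) (3/10) w {1,2,4} {1,4} i)"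
  proof (rule topk_eq[OF t1 _ ub])
    show "is_topk 6 3 (upd (1/2) (3/10) w {1,2,4} {1,4}) {2,5,6}"
      unfolding is_topk_def six upd_def tau_def w_def by (simp add: insert_Diff_if)
  qed
  have r1_24: "(\<Prod>i\<in>pol1 2 [({1,2,4}, {2,4})]. 1 - upd (1/2) (3/10) w {1,2,4} {2,4} i) = (\<Prod>i\<in>{1,5,6}. 1 - upd (1/2) (3/10) w {1,2,4} {2,4} i)"
  proof (rule topk_eq[OF t1 _ ub])
    show "is_topk 6 3 (upd (1/2) (3/10) w {1,2,4} {2,4}) {1,5,6}"
      unfolding is_topk_def six upd_def tau_def w_def by (simp add: insert_Diff_if)
  qed
  have r1_124: "(\<Prod>i\<in>pol1 2 [({1,2,4}, {1,2,4})]. 1 - upd (1/2) (3/10) w {1,2,4} {1,2,4} i) = (\<Prod>i\<in>{3,5,6}. 1 - upd (1/2) (3/10) w {1,2,4} {1,2,4} i)"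
  proof (rule topk_eq[OF t1 _ ub])
    show "is_topk 6 3 (upd (1/2) (3/10) w {1,2,4} {1,2,4}) {3,5,6}"
      unfolding is_topk_def six upd_def tau_def w_def by (simp add: insert_Diff_if)
  qed
  have r1: "total_reward p01 p11 T w0 pol1 = (\<Sum>I\<in>Pow {1,2,4}. obs_prob w {1,2,4} I *
     ((if I \<noteq> {} then 1 else 0) + (1 - (\<Prod>i\<in>pol1 2 [({1,2,4}, I)]. 1 - upd (1/2) (3/10) w {1,2,4} I i))))"
    unfolding total_reward_def assms(3) P w0 using val2[of pol1 "1/2" "3/10" w] f1 assms(8) assms(3,4,5) w0 by simp
  have r1v: "total_reward p01 p11 T w0 pol1 = 369065763/200000000"
    unfolding r1
    apply (subst sum_pow3, simp, simp, simp)
    apply (simp only: r1_e r1_1 r1_2 r1_4 r1_12 r1_14 r1_24 r1_124)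
    apply (simp add: obs_prob_def upd_def tau_def w_def insert_Diff_if)
    done
  have r2_e: "(\<Prod>i\<in>pol2 2 [({1,2,3}, {})]. 1 - upd (1/2) (3/10) w {1,2,3} {} i) = (\<Prod>i\<in>{1,2,3}. 1 - upd (1/2) (3/10) w {1,2,3} {} i)"
  proof (rule topk_eq[OF t2 _ ub])
    show "is_topk 6 3 (upd (1/2) (3/10) w {1,2,3} {}) {1,2,3}"
      unfolding is_topk_def six upd_def tau_def w_def by (simp add: insert_Diff_if)
  qed
  have r2_1: "(\<Prod>i\<in>pol2 2 [({1,2,3}, {1})]. 1 - upd (1/2) (3/10) w {1,2,3} {1} i) = (\<Prod>i\<in>{2,3,5}. 1 - upd (1/2) (3/10) w {1,2,3} {1} i)"
  proof (rule topk_eq[OF t2 _ ub])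
    show "is_topk 6 3 (upd (1/2) (3/10) w {1,2,3} {1}) {2,3,5}"
      unfolding is_topk_def six upd_def tau_def w_def by (simp add: insert_Diff_if)
  qed
  have r2_2: "(\<Prod>i\<in>pol2 2 [({1,2,3}, {2})]. 1 - upd (1/2) (3/10) w {1,2,3} {2} i) = (\<Prod>i\<in>{1,3,5}. 1 - upd (1/2) (3/10) w {1,2,3} {2} i)"
  proof (rule topk_eq[OF t2 _ ub])
    show "is_topk 6 3 (upd (1/2) (3/10) w {1,2,3} {2}) {1,3,5}"
      unfolding is_topk_def six upd_def tau_def w_def by (simp add: insert_Diff_if)
  qed
  have r2_3: "(\<Prod>i\<in>pol2 2 [({1,2,3}, {3})]. 1 - upd (1/2) (3/10) w {1,2,3} {3} i) = (\<Prod>i\<in>{1,2,5}. 1 - upd (1/2) (3/10) w {1,2,3} {3} i)"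
  proof (rule topk_eq[OF t2 _ ub])
    show "is_topk 6 3 (upd (1/2) (3/10) w {1,2,3} {3}) {1,2,5}"
      unfolding is_topk_def six upd_def tau_def w_def by (simp add: insert_Diff_if)
  qed
  have r2_12: "(\<Prod>i\<in>pol2 2 [({1,2,3}, {1,2})]. 1 - upd (1/2) (3/10) w {1,2,3} {1,2} i) = (\<Prod>i\<in>{3,5,6}. 1 - upd (1/2) (3/10) w {1,2,3} {1,2} i)"
  proof (rule topk_eq[OF t2 _ ub])
    show "is_topk 6 3 (upd (1/2) (3/10) w {1,2,3} {1,2}) {3,5,6}"
      unfolding is_topk_def six upd_def tau_def w_def by (simp add: insert_Diff_if)
  qed
  have r2_13: "(\<Prod>i\<in>pol2 2 [({1,2,3}, {1,3})]. 1 - upd (1/2) (3/10) w {1,2,3} {1,3} i) = (\<Prod>i\<in>{2,5,6}. 1 - upd (1/2) (3/10) w {1,2,3} {1,3} i)"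
  proof (rule topk_eq[OF t2 _ ub])
    show "is_topk 6 3 (upd (1/2) (3/10) w {1,2,3} {1,3}) {2,5,6}"
      unfolding is_topk_def six upd_def tau_def w_def by (simp add: insert_Diff_if)
  qed
  have r2_23: "(\<Prod>i\<in>pol2 2 [({1,2,3}, {2,3})]. 1 - upd (1/2) (3/10) w {1,2,3} {2,3} i) = (\<Prod>i\<in>{1,5,6}. 1 - upd (1/2) (3/10) w {1,2,3} {2,3} i)"
  proof (rule topk_eq[OF t2 _ ub])
    show "is_topk 6 3 (upd (1/2) (3/10) w {1,2,3} {2,3}) {1,5,6}"
      unfolding is_topk_def six upd_def tau_def w_def by (simp add: insert_Diff_if)
  qed
  have r2_123: "(\<Prod>i\<in>pol2 2 [({1,2,3}, {1,2,3})]. 1 - upd (1/2) (3/10) w {1,2,3} {1,2,3} i) = (\<Prod>i\<in>{4,5,6}. 1 - upd (1/2) (3/10) w {1,2,3} {1,2,3} i)"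
  proof (rule topk_eq[OF t2 _ ub])
    show "is_topk 6 3 (upd (1/2) (3/10) w {1,2,3} {1,2,3}) {4,5,6}"
      unfolding is_topk_def six upd_def tau_def w_def by (simp add: insert_Diff_if)
  qed
  have r2: "total_reward p01 p11 T w0 pol2 = (\<Sum>I\<in>Pow {1,2,3}. obs_prob w {1,2,3} I *
     ((if I \<noteq> {} then 1 else 0) + (1 - (\<Prod>i\<in>pol2 2 [({1,2,3}, I)]. 1 - upd (1/2) (3/10) w {1,2,3} I i))))"
    unfolding total_reward_def assms(3) P w0 using val2[of pol2 "1/2" "3/10" w] f2 p2 assms(3,4,5) w0 by simp
  have r2v: "total_reward p01 p11 T w0 pol2 = 720824/390625"
    unfolding r2
    apply (subst sum_pow3, simp, simp, simp)
    apply (simp only: r2_e r2_1 r2_2 r2_3 r2_12 r2_13 r2_23 r2_123)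
    apply (simp add: obs_prob_def upd_def tau_def w_def insert_Diff_if)
    done
  have lt: "total_reward p01 p11 T w0 pol1 > total_reward p01 p11 T w0 pol2"
    unfolding r1v r2v by simp
  have "\<not> optimal N k p01 p11 T w0 pol2"
    using lt assms(7) unfolding optimal_def by force
  then show ?thesis using lt p2 by blast
qed

end
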